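(* Let $X$ be a vector lattice and let $l : X \to \mathbb{R}$ be an order bounded linear functional with positive part $l_+ \neq 0$ and negative part $l_- \neq 0$. Then $\ker(l)$ is a Grothendieck subspace of $X$ if and only if $l_+$ and $l_-$ are Riesz homomorphisms on $X$, which in turn holds if and only if $\ker(l)$ is a Riesz subspace of $X$.
   Context: For an order bounded functional $l$, $l_+ = l \vee 0$ and $l_- = (-l)\vee 0$ in the Riesz space of order bounded functionals, so $l = l_+ - l_-$. A Riesz homomorphism is a linear functional preserving finite lattice operations. A Riesz subspace is a linear subspace closed under finite lattice operations. A linear subspace $H$ of a vector lattice is called a Grothendieck subspace (or $G$-space) if for all $x, y \in H$ one has $x \vee y \vee 0 + x \wedge y \wedge 0 \in H$. *)

theory Defs
  imports Complex_Main
begin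

definition order_bounded :: "('a::{ordered_real_vector,lattice} \<Rightarrow> real) \<Rightarrow> bool" where
  "order_bounded l \<longleftrightarrow> linear l \<and>
     (\<forall>a b. \<exists>M. \<forall>x. a \<le> x \<and> x \<le> b \<longrightarrow> \<bar>l x\<bar> \<le> M)"

definition fun_le :: "('a::{ordered_real_vector,lattice} \<Rightarrow> real) \<Rightarrow> ('a \<Rightarrow> real) \<Rightarrow> bool" where
  "fun_le f g \<longleftrightarrow> (\<forall>x. 0 \<le> x \<longrightarrow> f x \<le> g x)"

definition ob_sup :: "('a::{ordered_real_vector,lattice} \<Rightarrow> real) \<Rightarrow> ('a \<Rightarrow> real) \<Rightarrow> ('a \<Rightarrow> real) \<Rightarrow> bool" where
  "ob_sup f g h \<longleftrightarrow> order_bounded h \<and> fun_le f h \<and> fun_le g h \<and>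
     (\<forall>k. order_bounded k \<and> fun_le f k \<and> fun_le g k \<longrightarrow> fun_le h k)"

definition pos_part :: "('a::{ordered_real_vector,lattice} \<Rightarrow> real) \<Rightarrow> ('a \<Rightarrow> real)" where
  "pos_part l = (THE h. ob_sup l (\<lambda>_. 0) h)"

definition neg_part :: "('a::{ordered_real_vector,lattice} \<Rightarrow> real) \<Rightarrow> ('a \<Rightarrow> real)" where
  "neg_part l = pos_part (\<lambda>x. - l x)"

definition riesz_hom :: "('a::{ordered_real_vector,lattice} \<Rightarrow> real) \<Rightarrow> bool" where
  "riesz_hom f \<longleftrightarrow> linear f \<and>
     (\<forall>x y. f (sup x y) = max (f x) (f y) \<and> f (inf x y) = min (f x) (f y))"

definition riesz_subspace :: "'a::{ordered_real_vector,lattice} set \<Rightarrow> bool" where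
  "riesz_subspace H \<longleftrightarrow> subspace H \<and> (\<forall>x\<in>H. \<forall>y\<in>H. sup x y \<in> H \<and> inf x y \<in> H)"

definition grothendieck_subspace :: "'a::{ordered_real_vector,lattice} set \<Rightarrow> bool" where
  "grothendieck_subspace H \<longleftrightarrow> subspace H \<and>
     (\<forall>x\<in>H. \<forall>y\<in>H. sup (sup x y) 0 + inf (inf x y) 0 \<in> H)"

end

theory Submission imports Defs begin
lemma add_sup_l: fixes c x y :: "'a::{ordered_real_vector,lattice}"
  shows "c + sup x y = sup (c+x) (c+y)"
proof (rule antisym)
  have "x \<le> sup (c+x) (c+y) - c" by (simp add: le_diff_eq add.commute)
  moreover have "y \<le> sup (c+x) (c+y) - c" by (simp add: le_diff_eq add.commute)
  ultimately have "sup x y \<le> sup (c+x) (c+y) - c" by (rule sup_least)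
  then show "c + sup x y \<le> sup (c+x) (c+y)" by (simp add: le_diff_eq add.commute)
  show "sup (c+x) (c+y) \<le> c + sup x y" by (intro sup_least add_left_mono) auto
qed

lemma add_inf_l: fixes c x y :: "'a::{ordered_real_vector,lattice}"
  shows "c + inf x y = inf (c+x) (c+y)"
proof (rule antisym)
  have "inf (c+x) (c+y) - c \<le> x" by (simp add: diff_le_eq add.commute)
  moreover have "inf (c+x) (c+y) - c \<le> y" by (simp add: diff_le_eq add.commute)
  ultimately have "inf (c+x) (c+y) - c \<le> inf x y" by (rule inf_greatest)
  then show "inf (c+x) (c+y) \<le> c + inf x y" by (metis diff_le_eq add.commute)
  show "c + inf x y \<le> inf (c+x) (c+y)" by (intro inf_greatest add_left_mono) auto
qed

lemma neg_sup: fixes x y :: "'a::{ordered_real_vector,lattice}"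
  shows "- sup x y = inf (-x) (-y)"
proof (rule antisym)
  show "- sup x y \<le> inf (-x) (-y)" by (intro inf_greatest) (auto simp: neg_le_iff_le)
  have "- inf (-x) (-y) \<ge> x" by (metis le_minus_iff inf_le1)
  moreover have "- inf (-x) (-y) \<ge> y" by (metis le_minus_iff inf_le2)
  ultimately have "sup x y \<le> - inf (-x) (-y)" by simp
  then show "inf (-x) (-y) \<le> - sup x y" by (simp add: le_minus_iff)
qed

lemma neg_inf: fixes x y :: "'a::{ordered_real_vector,lattice}"
  shows "- inf x y = sup (-x) (-y)"
  using neg_sup[of "-x" "-y"] by (metis minus_minus)

lemma sup_inf_sum: fixes x y :: "'a::{ordered_real_vector,lattice}"
  shows "sup x y + inf x y = x + y"
proof -
  have "x + y - sup x y = (x + y) + inf (-x) (-y)" by (simp add: neg_sup[symmetric])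
  also have "\<dots> = inf y x" by (simp add: add_inf_l algebra_simps)
  finally show ?thesis by (simp add: inf_commute algebra_simps)
qed

lemma pos_neg_decomp: fixes x :: "'a::{ordered_real_vector,lattice}"
  shows "x = sup x 0 - sup (-x) 0"
proof -
  have "sup (-x) 0 = - inf x 0" by (simp add: neg_inf)
  then show ?thesis using sup_inf_sum[of x 0] by (simp add: algebra_simps)
qed

lemma riesz_decomp: fixes y x1 x2 :: "'a::{ordered_real_vector,lattice}"
  assumes "0 \<le> y" "y \<le> x1 + x2" "0 \<le> x1" "0 \<le> x2"
  shows "\<exists>y1 y2. y = y1 + y2 \<and> 0 \<le> y1 \<and> y1 \<le> x1 \<and> 0 \<le> y2 \<and> y2 \<le> x2"
proof (intro exI conjI)
  show "y = inf y x1 + (y - inf y x1)" by simp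
  show "0 \<le> inf y x1" using assms by simp
  show "inf y x1 \<le> x1" by simp
  have e: "y - inf y x1 = sup 0 (y - x1)"
    using add_sup_l[of y "-y" "-x1"] by (simp add: neg_inf[symmetric])
  show "0 \<le> y - inf y x1" unfolding e by simp
  have "y - x1 \<le> x2" using assms by (simp add: diff_le_eq add.commute)
  then show "y - inf y x1 \<le> x2" unfolding e using assms by simp
qed

lemma scale_inf: fixes x y :: "'a::{ordered_real_vector,lattice}"
  assumes "c > 0" shows "c *\<^sub>R inf x y = inf (c *\<^sub>R x) (c *\<^sub>R y)"
proof (rule antisym)
  show "c *\<^sub>R inf x y \<le> inf (c *\<^sub>R x) (c *\<^sub>R y)"
    using assms by (intro inf_greatest scaleR_left_mono) auto
  have "(1/c) *\<^sub>R inf (c *\<^sub>R x) (c *\<^sub>R y) \<le> inf x y"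
  proof (rule inf_greatest)
    show "(1/c) *\<^sub>R inf (c *\<^sub>R x) (c *\<^sub>R y) \<le> x"
      using scaleR_left_mono[OF inf_le1[of "c *\<^sub>R x" "c *\<^sub>R y"], of "1/c"] assms by simp
    show "(1/c) *\<^sub>R inf (c *\<^sub>R x) (c *\<^sub>R y) \<le> y"
      using scaleR_left_mono[OF inf_le2[of "c *\<^sub>R x" "c *\<^sub>R y"], of "1/c"] assms by simp
  qed
  from scaleR_left_mono[OF this, of c] assms
  show "inf (c *\<^sub>R x) (c *\<^sub>R y) \<le> c *\<^sub>R inf x y" by simp
qed

lemma disj_scale: fixes u v :: "'a::{ordered_real_vector,lattice}"
  assumes "0 \<le> u" "0 \<le> v" "inf u v = 0" "a > 0" "b > 0"
  shows "inf (a *\<^sub>R u) (b *\<^sub>R v) = 0"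
proof (rule antisym)
  let ?C = "max a b"
  have "inf (a *\<^sub>R u) (b *\<^sub>R v) \<le> inf (?C *\<^sub>R u) (?C *\<^sub>R v)"
    using assms by (intro inf_mono scaleR_right_mono) auto
  also have "\<dots> = ?C *\<^sub>R inf u v" by (rule scale_inf[symmetric]) (use assms in auto)
  finally show "inf (a *\<^sub>R u) (b *\<^sub>R v) \<le> 0" using assms by simp
  show "0 \<le> inf (a *\<^sub>R u) (b *\<^sub>R v)" using assms by (simp add: scaleR_nonneg_nonneg)
qed

lemma disj_pos: fixes u v :: "'a::{ordered_real_vector,lattice}"
  assumes "inf u v = 0"
  shows "sup (u - v) 0 = u"
proof -
  have "sup (u - v) 0 = u + sup (-v) (-u)" by (simp add: add_sup_l)
  also have "\<dots> = u - inf v u" by (simp add: neg_inf)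
  finally show ?thesis using assms by (simp add: inf_commute)
qed

lemma pos_neg_disj: fixes z :: "'a::{ordered_real_vector,lattice}"
  shows "inf (sup z 0) (sup (-z) 0) = 0"
proof -
  let ?b = "sup (-z) 0"
  have "sup z 0 = ?b + z" using pos_neg_decomp[of z] by (simp add: algebra_simps)
  then have "inf (sup z 0) ?b = inf (?b + z) (?b + 0)" by simp
  also have "\<dots> = ?b + inf z 0" by (simp add: add_inf_l)
  also have "\<dots> = ?b - sup (-z) 0" by (metis neg_inf minus_zero minus_minus diff_conv_add_uminus)
  finally show ?thesis by simp
qed

lemma sup_as_pos: fixes x y :: "'a::{ordered_real_vector,lattice}"
  shows "sup x y = y + sup (x - y) 0"
  by (simp add: add_sup_l)

definition RK :: "('a::{ordered_real_vector,lattice} \<Rightarrow> real) \<Rightarrow> 'a \<Rightarrow> real" where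
  "RK l x = Sup (l ` {y. 0 \<le> y \<and> y \<le> x})"

definition EP :: "('a::{ordered_real_vector,lattice} \<Rightarrow> real) \<Rightarrow> 'a \<Rightarrow> real" where
  "EP l x = RK l (sup x 0) - RK l (sup (-x) 0)"

context
  fixes l :: "'a::{ordered_real_vector,lattice} \<Rightarrow> real"
  assumes ob: "order_bounded l"
begin

lemma ob_lin: "linear l" using ob by (simp add: order_bounded_def)

lemma rk_bdd: "bdd_above (l ` {y. 0 \<le> y \<and> y \<le> x})"
proof -
  obtain M where "\<forall>y. 0 \<le> y \<and> y \<le> x \<longrightarrow> \<bar>l y\<bar> \<le> M"
    using ob unfolding order_bounded_def by blast
  then show ?thesis by (intro bdd_aboveI[where M=M]) (auto simp: abs_le_iff)
qed

lemma rk_upper: "0 \<le> y \<Longrightarrow> y \<le> x \<Longrightarrow> l y \<le> RK l x"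
  unfolding RK_def by (rule cSup_upper) (use rk_bdd in auto)

lemma rk_least: "0 \<le> x \<Longrightarrow> (\<And>y. 0 \<le> y \<Longrightarrow> y \<le> x \<Longrightarrow> l y \<le> M) \<Longrightarrow> RK l x \<le> M"
  unfolding RK_def by (rule cSup_least) auto

lemma l0: "l 0 = 0" using ob_lin by (simp add: linear_0)

lemma rk_nonneg: "0 \<le> x \<Longrightarrow> 0 \<le> RK l x"
  using rk_upper[of 0 x] l0 by simp

lemma rk_zero: "RK l 0 = 0"
proof (rule antisym)
  show "RK l 0 \<le> 0" by (rule rk_least) (auto simp: l0 dest: antisym)
  show "0 \<le> RK l 0" by (rule rk_nonneg) simp
qed

lemma rk_add: assumes a: "0 \<le> a" and b: "0 \<le> b" shows "RK l (a+b) = RK l a + RK l b"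
proof (rule antisym)
  show "RK l (a+b) \<le> RK l a + RK l b"
  proof (rule rk_least)
    show "0 \<le> a + b" using a b by simp
    fix y assume "0 \<le> y" "y \<le> a + b"
    then obtain y1 y2 where y: "y = y1 + y2" "0 \<le> y1" "y1 \<le> a" "0 \<le> y2" "y2 \<le> b"
      using riesz_decomp a b by blast
    have "l y = l y1 + l y2" using y ob_lin by (simp add: linear_add)
    also have "\<dots> \<le> RK l a + RK l b" using y by (intro add_mono rk_upper) auto
    finally show "l y \<le> RK l a + RK l b" .
  qed
  have "\<And>y2. 0 \<le> y2 \<Longrightarrow> y2 \<le> b \<Longrightarrow> RK l a \<le> RK l (a+b) - l y2"
  proof -
    fix y2 assume y2: "0 \<le> y2" "y2 \<le> b"
    show "RK l a \<le> RK l (a+b) - l y2"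
    proof (rule rk_least[OF a])
      fix y1 assume "0 \<le> y1" "y1 \<le> a"
      then have "l (y1 + y2) \<le> RK l (a+b)" using y2 by (intro rk_upper) (auto intro: add_mono)
      then show "l y1 \<le> RK l (a+b) - l y2" using ob_lin by (simp add: linear_add)
    qed
  qed
  then have "RK l b \<le> RK l (a+b) - RK l a"
    by (intro rk_least[OF b]) (auto simp: algebra_simps)
  then show "RK l a + RK l b \<le> RK l (a+b)" by simp
qed

lemma rk_scale_le: assumes x: "0 \<le> x" and c: "c > 0" shows "RK l (c *\<^sub>R x) \<le> c * RK l x"
proof (rule rk_least)
  show "0 \<le> c *\<^sub>R x" using x c by (simp add: scaleR_nonneg_nonneg)
  fix y assume y: "0 \<le> y" "y \<le> c *\<^sub>R x"
  have "0 \<le> (1/c) *\<^sub>R y" using y c by (simp add: scaleR_nonneg_nonneg)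
  moreover have "(1/c) *\<^sub>R y \<le> x"
    using scaleR_left_mono[OF y(2), of "1/c"] c by simp
  ultimately have "l ((1/c) *\<^sub>R y) \<le> RK l x" by (rule rk_upper)
  then have "(1/c) * l y \<le> RK l x" using ob_lin by (simp add: linear_scale)
  then show "l y \<le> c * RK l x" using c by (simp add: field_simps)
qed

lemma rk_scale: assumes x: "0 \<le> x" and c: "c \<ge> 0" shows "RK l (c *\<^sub>R x) = c * RK l x"
proof (cases "c = 0")
  case True then show ?thesis by (simp add: rk_zero)
next
  case False
  then have c: "c > 0" using c by simp
  have "RK l x = RK l ((1/c) *\<^sub>R (c *\<^sub>R x))" using c by simp
  also have "\<dots> \<le> (1/c) * RK l (c *\<^sub>R x)"
    using c x by (intro rk_scale_le) (auto simp: scaleR_nonneg_nonneg)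
  finally have "c * RK l x \<le> RK l (c *\<^sub>R x)" using c by (simp add: field_simps)
  with rk_scale_le[OF x c] show ?thesis by simp
qed

lemma ep_diff: assumes a: "0 \<le> a" and b: "0 \<le> b" shows "EP l (a - b) = RK l a - RK l b"
proof -
  let ?p = "sup (a - b) 0" and ?n = "sup (-(a-b)) 0"
  have "a - b = ?p - ?n" by (rule pos_neg_decomp)
  then have "?p + b = a + ?n" by (simp add: algebra_simps)
  then have "RK l (?p + b) = RK l (a + ?n)" by simp
  then have "RK l ?p + RK l b = RK l a + RK l ?n" using a b by (simp add: rk_add)
  then show ?thesis unfolding EP_def by simp
qed

lemma ep_cone: "0 \<le> x \<Longrightarrow> EP l x = RK l x"
  using ep_diff[of x 0] by (simp add: rk_zero)

lemma ep_decomp: "EP l x = EP l (sup x 0 - sup (-x) 0)"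
  using pos_neg_decomp[of x] by simp

lemma ep_linear: "linear (EP l)"
proof (rule linearI)
  fix x y :: 'a
  let ?xp = "sup x 0" and ?xn = "sup (-x) 0" and ?yp = "sup y 0" and ?yn = "sup (-y) 0"
  have "x + y = (?xp - ?xn) + (?yp - ?yn)"
    using pos_neg_decomp[of x] pos_neg_decomp[of y] by (rule arg_cong2[where f="(+)"])
  also have "\<dots> = (?xp + ?yp) - (?xn + ?yn)" by (simp add: algebra_simps)
  finally have "x + y = (?xp + ?yp) - (?xn + ?yn)" .
  then have "EP l (x + y) = RK l (?xp + ?yp) - RK l (?xn + ?yn)"
    by (simp add: ep_diff)
  also have "\<dots> = EP l x + EP l y" by (simp add: rk_add EP_def)
  finally show "EP l (x + y) = EP l x + EP l y" .
next
  fix c :: real and x :: 'a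
  let ?xp = "sup x 0" and ?xn = "sup (-x) 0"
  have d: "c *\<^sub>R x = c *\<^sub>R ?xp - c *\<^sub>R ?xn"
    using pos_neg_decomp[of x] by (metis scaleR_right_diff_distrib)
  show "EP l (c *\<^sub>R x) = c *\<^sub>R EP l x"
  proof (cases "c \<ge> 0")
    case True
    have "EP l (c *\<^sub>R x) = RK l (c *\<^sub>R ?xp) - RK l (c *\<^sub>R ?xn)"
      unfolding d using True by (intro ep_diff) (auto simp: scaleR_nonneg_nonneg)
    also have "\<dots> = c * EP l x" using True by (simp add: rk_scale EP_def algebra_simps)
    finally show ?thesis by simp
  next
    case False
    have d2: "c *\<^sub>R x = (-c) *\<^sub>R ?xn - (-c) *\<^sub>R ?xp" using d by simp
    have "EP l (c *\<^sub>R x) = RK l ((-c) *\<^sub>R ?xn) - RK l ((-c) *\<^sub>R ?xp)"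
      unfolding d2 using False by (intro ep_diff) (auto simp: scaleR_nonneg_nonneg scaleR_nonpos_nonneg)
    also have "\<dots> = (-c) * RK l ?xn - (-c) * RK l ?xp"
      using False by (simp only: rk_scale[of ?xn "-c"] rk_scale[of ?xp "-c"] sup_ge2)
    also have "\<dots> = c * EP l x" by (simp add: EP_def algebra_simps)
    finally show ?thesis by simp
  qed
qed

lemma ep_mono: assumes "x \<le> y" shows "EP l x \<le> EP l y"
proof -
  have "EP l y - EP l x = EP l (y - x)" using ep_linear by (simp add: linear_diff)
  also have "\<dots> = RK l (y - x)" using assms by (simp add: ep_cone)
  also have "\<dots> \<ge> 0" using assms by (simp add: rk_nonneg)
  finally show ?thesis by simp
qed

lemma ep_ob: "order_bounded (EP l)"
  unfolding order_bounded_def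
proof (intro conjI allI ep_linear)
  fix a b :: 'a
  show "\<exists>M. \<forall>x. a \<le> x \<and> x \<le> b \<longrightarrow> \<bar>EP l x\<bar> \<le> M"
    by (rule exI[of _ "\<bar>EP l a\<bar> + \<bar>EP l b\<bar>"])
       (auto dest!: ep_mono simp: abs_le_iff)
qed

lemma ep_sup: "ob_sup l (\<lambda>_. 0) (EP l)"
  unfolding ob_sup_def
proof (intro conjI allI impI ep_ob)
  show "fun_le l (EP l)" unfolding fun_le_def
    by (auto simp: ep_cone intro: rk_upper)
  show "fun_le (\<lambda>_. 0) (EP l)" unfolding fun_le_def
    by (auto simp: ep_cone intro: rk_nonneg)
  fix k assume k: "order_bounded k \<and> fun_le l k \<and> fun_le (\<lambda>_. 0) k"
  then have kl: "linear k" by (simp add: order_bounded_def)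
  show "fun_le (EP l) k" unfolding fun_le_def
  proof (intro allI impI)
    fix x :: 'a assume x: "0 \<le> x"
    have "RK l x \<le> k x"
    proof (rule rk_least[OF x])
      fix y assume y: "0 \<le> y" "y \<le> x"
      have "l y \<le> k y" using k y by (simp add: fun_le_def)
      moreover have "0 \<le> k (x - y)" using k y by (simp add: fun_le_def)
      ultimately show "l y \<le> k x" using kl by (simp add: linear_diff)
    qed
    then show "EP l x \<le> k x" using x by (simp add: ep_cone)
  qed
qed

lemma ob_sup_unique: assumes h: "ob_sup l (\<lambda>_. 0) h" shows "h = EP l"
proof
  fix x :: 'a
  have hl: "linear h" using h by (simp add: ob_sup_def order_bounded_def)
  have cone: "h z = EP l z" if z: "0 \<le> z" for z
  proof -
    have "fun_le h (EP l)" using h ep_sup ep_ob by (simp add: ob_sup_def)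
    moreover have "fun_le (EP l) h" using h ep_sup by (simp add: ob_sup_def)
    ultimately show ?thesis using z by (simp add: fun_le_def antisym)
  qed
  have "h x = h (sup x 0) - h (sup (-x) 0)"
    using pos_neg_decomp[of x] hl by (metis linear_diff)
  also have "\<dots> = EP l (sup x 0) - EP l (sup (-x) 0)" by (simp add: cone)
  also have "\<dots> = EP l x" using pos_neg_decomp[of x] ep_linear by (metis linear_diff)
  finally show "h x = EP l x" .
qed

lemma pos_part_eq: "pos_part l = EP l"
  unfolding pos_part_def
  by (rule the_equality) (auto intro: ep_sup ob_sup_unique)

end

lemma ob_neg: "order_bounded l \<Longrightarrow> order_bounded (\<lambda>x. - l x)"
  unfolding order_bounded_def by (auto simp: linear_compose_neg)

lemma ob_diff: assumes "order_bounded f" "order_bounded g"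
  shows "order_bounded (\<lambda>x. f x - g x)"
  unfolding order_bounded_def
proof (intro conjI allI)
  show "linear (\<lambda>x. f x - g x)" using assms by (simp add: order_bounded_def linear_compose_sub)
  fix a b :: 'a
  obtain M1 where M1: "\<forall>x. a \<le> x \<and> x \<le> b \<longrightarrow> \<bar>f x\<bar> \<le> M1" using assms(1) unfolding order_bounded_def by blast
  obtain M2 where M2: "\<forall>x. a \<le> x \<and> x \<le> b \<longrightarrow> \<bar>g x\<bar> \<le> M2" using assms(2) unfolding order_bounded_def by blast
  show "\<exists>M. \<forall>x. a \<le> x \<and> x \<le> b \<longrightarrow> \<bar>f x - g x\<bar> \<le> M"
  proof (intro exI[of _ "M1 + M2"] allI impI)
    fix x assume "a \<le> x \<and> x \<le> b"
    then have "\<bar>f x\<bar> \<le> M1" "\<bar>g x\<bar> \<le> M2" using M1 M2 by auto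
    then show "\<bar>f x - g x\<bar> \<le> M1 + M2" by arith
  qed
qed

lemma ob_add: assumes "order_bounded f" "order_bounded g"
  shows "order_bounded (\<lambda>x. f x + g x)"
  using ob_diff[OF assms(1) ob_neg[OF assms(2)]] by simp

lemma pos_part_sup: "order_bounded l \<Longrightarrow> ob_sup l (\<lambda>_. 0) (pos_part l)"
  by (simp add: pos_part_eq ep_sup)

lemma l_decomp: assumes ob: "order_bounded l"
  shows "l x = pos_part l x - neg_part l x"
proof -
  let ?P = "pos_part l" and ?N = "neg_part l"
  have sP: "ob_sup l (\<lambda>_. 0) ?P" using pos_part_sup[OF ob] .
  have sN: "ob_sup (\<lambda>x. - l x) (\<lambda>_. 0) ?N" unfolding neg_part_def using pos_part_sup[OF ob_neg[OF ob]] .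
  have obP: "order_bounded ?P" and obN: "order_bounded ?N" using sP sN by (auto simp: ob_sup_def)
  have cone: "?P z = ?N z + l z" if z: "0 \<le> z" for z
  proof -
    have mN: "\<And>k. order_bounded k \<Longrightarrow> fun_le (\<lambda>x. - l x) k \<Longrightarrow> fun_le (\<lambda>_. 0) k \<Longrightarrow> fun_le ?N k"
      using sN by (simp add: ob_sup_def)
    have mP: "\<And>k. order_bounded k \<Longrightarrow> fun_le l k \<Longrightarrow> fun_le (\<lambda>_. 0) k \<Longrightarrow> fun_le ?P k"
      using sP by (simp add: ob_sup_def)
    have "fun_le ?N (\<lambda>x. ?P x - l x)"
      by (rule mN[OF ob_diff[OF obP ob]]) (use sP in \<open>auto simp: ob_sup_def fun_le_def\<close>)
    moreover have "fun_le ?P (\<lambda>x. ?N x + l x)"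
      by (rule mP[OF ob_add[OF obN ob]]) (use sN in \<open>auto simp: ob_sup_def fun_le_def\<close>)
    ultimately have "?N z \<le> ?P z - l z" "?P z \<le> ?N z + l z" using z unfolding fun_le_def by auto
    then show ?thesis by linarith
  qed
  have lin: "linear l" "linear ?P" "linear ?N" using ob obP obN by (auto simp: order_bounded_def)
  have "?P x - ?N x = (?P (sup x 0) - ?P (sup (-x) 0)) - (?N (sup x 0) - ?N (sup (-x) 0))"
    using pos_neg_decomp[of x] lin by (metis linear_diff)
  also have "\<dots> = l (sup x 0) - l (sup (-x) 0)" by (simp add: cone)
  also have "\<dots> = l x" using pos_neg_decomp[of x] lin by (metis linear_diff)
  finally show ?thesis by simp
qed

lemma witness_pos: assumes ob: "order_bounded l" and ne: "pos_part l \<noteq> (\<lambda>_. 0)"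
  shows "\<exists>w. 0 \<le> w \<and> l w > 0"
proof (rule ccontr)
  assume "\<not> ?thesis"
  then have le: "\<And>w. 0 \<le> w \<Longrightarrow> l w \<le> 0" by force
  have z: "RK l z = 0" if "0 \<le> z" for z
    using rk_least[OF ob that le] rk_nonneg[OF ob that] by simp
  have "EP l = (\<lambda>_. 0)" by (rule ext) (simp add: EP_def z)
  with ne show False by (simp add: pos_part_eq[OF ob])
qed

lemma riesz_crit:
  fixes P :: "'a::{ordered_real_vector,lattice} \<Rightarrow> real"
  assumes lin: "linear P" and nn: "\<And>x. 0 \<le> x \<Longrightarrow> 0 \<le> P x"
    and dj: "\<And>u v. 0 \<le> u \<Longrightarrow> 0 \<le> v \<Longrightarrow> inf u v = 0 \<Longrightarrow> P u = 0 \<or> P v = 0"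
  shows "riesz_hom P"
proof -
  have pos: "P (sup z 0) = max (P z) 0" for z
  proof -
    let ?a = "sup z 0" and ?b = "sup (-z) 0"
    have pz: "P z = P ?a - P ?b" using pos_neg_decomp[of z] lin by (metis linear_diff)
    have "P ?a = 0 \<or> P ?b = 0" using dj[of ?a ?b] pos_neg_disj[of z] by simp
    moreover have "0 \<le> P ?a" "0 \<le> P ?b" by (auto intro: nn)
    ultimately show ?thesis using pz by auto
  qed
  have s: "P (sup x y) = max (P x) (P y)" for x y
  proof -
    have "P (sup x y) = P y + P (sup (x - y) 0)" by (simp add: sup_as_pos[of x y] linear_add[OF lin])
    also have "\<dots> = P y + max (P x - P y) 0" by (simp add: pos linear_diff[OF lin])
    finally show ?thesis by auto
  qed
  have i: "P (inf x y) = min (P x) (P y)" for x y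
  proof -
    have "inf x y = x + y - sup x y" using sup_inf_sum[of x y] by (simp add: algebra_simps)
    then have "P (inf x y) = P x + P y - P (sup x y)" by (simp add: linear_add[OF lin] linear_diff[OF lin])
    then show ?thesis by (simp add: s)
  qed
  show ?thesis unfolding riesz_hom_def using lin s i by simp
qed

lemma key: assumes ob: "order_bounded l"
  and wp: "0 \<le> wp" "l wp > 0" and wn: "0 \<le> wn" "l wn < 0"
  and G: "grothendieck_subspace {x. l x = 0}"
  and x: "l x = 0"
  shows "l (sup x 0) = 0"
proof -
  have lin: "linear l" using ob by (simp add: order_bounded_def)
  let ?p = "sup x 0"
  have ex: "\<exists>y. l y = 0 \<and> ?p \<le> y"
  proof (cases "l ?p = 0")
    case True then show ?thesis by blast
  next
    case False
    show ?thesis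
    proof (cases "l ?p > 0")
      case True
      let ?s = "l ?p / (- l wn)"
      have s: "?s \<ge> 0" using True wn by (intro divide_nonneg_pos) auto
      have "l (?p + ?s *\<^sub>R wn) = l ?p + ?s * l wn" by (simp only: linear_add[OF lin] linear_scale[OF lin] real_scaleR_def)
      also have "\<dots> = 0" using wn by (simp add: field_simps)
      finally have "l (?p + ?s *\<^sub>R wn) = 0" .
      moreover have "?p \<le> ?p + ?s *\<^sub>R wn" using scaleR_nonneg_nonneg[OF s wn(1)] le_add_same_cancel1 by blast
      ultimately show ?thesis by blast
    next
      case False2: False
      then have neg: "l ?p < 0" using False by simp
      let ?s = "- l ?p / l wp"
      have s: "?s \<ge> 0" using neg wp by (intro divide_nonneg_pos) auto
      have "l (?p + ?s *\<^sub>R wp) = l ?p + ?s * l wp" by (simp only: linear_add[OF lin] linear_scale[OF lin] real_scaleR_def)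
      also have "\<dots> = 0" using wp by (simp add: field_simps)
      finally have "l (?p + ?s *\<^sub>R wp) = 0" .
      moreover have "?p \<le> ?p + ?s *\<^sub>R wp" using scaleR_nonneg_nonneg[OF s wp(1)] le_add_same_cancel1 by blast
      ultimately show ?thesis by blast
    qed
  qed
  then obtain y where y: "l y = 0" "?p \<le> y" by blast
  have xy: "x \<le> y" and y0: "0 \<le> y" using y(2) sup_ge1[of x 0] sup_ge2[of 0 x] by (auto dest: order_trans)
  have "sup (sup x y) 0 + inf (inf x y) 0 \<in> {x. l x = 0}"
    using G x y unfolding grothendieck_subspace_def by blast
  moreover have "sup (sup x y) 0 = y" using xy y0 by (simp add: sup_absorb2 sup_absorb1)
  moreover have "inf (inf x y) 0 = inf x 0" using xy by (simp add: inf_absorb1)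
  ultimately have "l (y + inf x 0) = 0" by simp
  then have "l (inf x 0) = 0" using y by (simp add: linear_add[OF lin])
  moreover have "sup x 0 = x - inf x 0" using sup_inf_sum[of x 0] by (simp add: algebra_simps)
  ultimately show ?thesis using x by (simp add: linear_diff[OF lin])
qed

lemma main_dir: assumes ob: "order_bounded l"
  and wp: "0 \<le> wp" "l wp > 0" and wn: "0 \<le> wn" "l wn < 0"
  and G: "grothendieck_subspace {x. l x = 0}"
  shows "riesz_hom (pos_part l)"
proof -
  have lin: "linear l" using ob by (simp add: order_bounded_def)
  show ?thesis unfolding pos_part_eq[OF ob]
  proof (rule riesz_crit)
    show "linear (EP l)" by (rule ep_linear[OF ob])
    show "0 \<le> EP l x" if "0 \<le> x" for x using that by (simp add: ep_cone[OF ob] rk_nonneg[OF ob])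
    fix u v :: 'a assume u: "0 \<le> u" and v: "0 \<le> v" and uv: "inf u v = 0"
    show "EP l u = 0 \<or> EP l v = 0"
    proof (rule ccontr)
      assume "\<not> ?thesis"
      then have "RK l u > 0" "RK l v > 0"
        using u v rk_nonneg[OF ob u] rk_nonneg[OF ob v] by (auto simp: ep_cone[OF ob])
      have ex: "\<exists>u'. 0 \<le> u' \<and> u' \<le> z \<and> l u' > 0" if "0 \<le> z" "RK l z > 0" for z
      proof (rule ccontr)
        assume "\<not> ?thesis"
        then have "RK l z \<le> 0" by (intro rk_least[OF ob \<open>0 \<le> z\<close>]) force
        with that show False by simp
      qed
      obtain u' where u': "0 \<le> u'" "u' \<le> u" "l u' > 0" using ex u \<open>RK l u > 0\<close> by blast
      obtain v' where v': "0 \<le> v'" "v' \<le> v" "l v' > 0" using ex v \<open>RK l v > 0\<close> by blast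
      have uv': "inf u' v' = 0"
      proof (rule antisym)
        have "inf u' v' \<le> inf u v" using u' v' by (rule_tac inf_mono) auto
        then show "inf u' v' \<le> 0" using uv by simp
        show "0 \<le> inf u' v'" using u' v' by simp
      qed
      let ?a = "l u'" and ?b = "l v'"
      let ?x = "?b *\<^sub>R u' - ?a *\<^sub>R v'"
      have lx: "l ?x = 0" by (simp add: linear_diff[OF lin] linear_scale[OF lin])
      have "inf (?b *\<^sub>R u') (?a *\<^sub>R v') = 0" using disj_scale[OF u'(1) v'(1) uv' v'(3) u'(3)] .
      then have "sup ?x 0 = ?b *\<^sub>R u'" by (rule disj_pos)
      then have "l (sup ?x 0) = ?b * ?a" by (simp add: linear_scale[OF lin])
      also have "\<dots> > 0" using u' v' by simp
      finally show False using key[OF ob wp wn G lx] by simp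
    qed
  qed
qed

lemma b_to_c: assumes ob: "order_bounded l"
  and P: "riesz_hom (pos_part l)" and N: "riesz_hom (neg_part l)"
  shows "riesz_subspace {x. l x = 0}"
  unfolding riesz_subspace_def
proof (intro conjI ballI)
  have lin: "linear l" using ob by (simp add: order_bounded_def)
  show "subspace {x. l x = 0}" by (rule linear_subspace_kernel[OF lin])
  fix x y assume "x \<in> {x. l x = 0}" "y \<in> {x. l x = 0}"
  then have "pos_part l x = neg_part l x" "pos_part l y = neg_part l y"
    using l_decomp[OF ob, of x] l_decomp[OF ob, of y] by auto
  then show "sup x y \<in> {x. l x = 0}" "inf x y \<in> {x. l x = 0}"
    using P N l_decomp[OF ob, of "sup x y"] l_decomp[OF ob, of "inf x y"]
    by (auto simp: riesz_hom_def)
qed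

lemma c_to_a: assumes "riesz_subspace H" shows "grothendieck_subspace H"
proof -
  have S: "subspace H" using assms by (simp add: riesz_subspace_def)
  have "0 \<in> H" using subspace_0[OF S] .
  then show ?thesis using assms S unfolding grothendieck_subspace_def riesz_subspace_def
    by (auto intro!: subspace_add[OF S])
qed

theorem lemma2:
  fixes l :: "'a::{ordered_real_vector,lattice} \<Rightarrow> real"
  assumes "order_bounded l"
    and "pos_part l \<noteq> (\<lambda>_. 0)"
    and "neg_part l \<noteq> (\<lambda>_. 0)"
  shows "(grothendieck_subspace {x. l x = 0} \<longleftrightarrow> riesz_hom (pos_part l) \<and> riesz_hom (neg_part l))
       \<and> (riesz_hom (pos_part l) \<and> riesz_hom (neg_part l) \<longleftrightarrow> riesz_subspace {x. l x = 0})"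
proof -
  obtain wp where wp: "0 \<le> wp" "l wp > 0" using witness_pos[OF assms(1,2)] by blast
  obtain wn where wn: "0 \<le> wn" "- l wn > 0"
    using witness_pos[OF ob_neg[OF assms(1)]] assms(3) unfolding neg_part_def by blast
  have AB: "riesz_hom (pos_part l) \<and> riesz_hom (neg_part l)" if G: "grothendieck_subspace {x. l x = 0}"
  proof
    show "riesz_hom (pos_part l)" using main_dir[OF assms(1) wp, of wn] wn G by simp
    have "{x. - l x = 0} = {x. l x = 0}" by simp
    then have G': "grothendieck_subspace {x. - l x = 0}" using G by simp
    show "riesz_hom (neg_part l)" unfolding neg_part_def
      using main_dir[OF ob_neg[OF assms(1)] wn(1), of wp] wn wp G' by simp
  qed
  show ?thesis using AB b_to_c[OF assms(1)] c_to_a by blast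
qed

end
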